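(* Let $(M,d)$ be a complete separable metric space. Then $c_0$ bi-Lipschitzly embeds into $M$ if and only if $\mathrm{I}^{\mathrm{Lip}}_{c_0}(M)\ge\omega_1$.
   Context: For finite $G\subset\mathbb{N}$ and countable $\mathbb{E}\subset\mathbb{R}$ with $0\in\mathbb{E}$, $[\mathbb{E},G]=\{f:\mathbb{N}\to\mathbb{E}:\mathrm{supp}(f)\subset G\}$, viewed as a subset of $c_0$. $\mathbb{E}$-bunches, the order $\preceq$ (for $\chi=(x_f)_{f\in[\mathbb{E},F]}$, $\psi=(y_f)_{f\in[\mathbb{E},G]}$: $F$ is an initial segment of $G$ and $y_f=x_f$ on $[\mathbb{E},F]$), $\mathbb{E}$-vines (sets of bunches closed under $\preceq$-predecessors), derivatives $\mathcal{V}^{(1)}=\mathcal{V}\setminus\{\preceq\text{-maximal elements}\}$, $\mathcal{V}^{(\alpha+1)}=(\mathcal{V}^{(\alpha)})^{(1)}$, $\mathcal{V}^{(\alpha)}=\bigcap_{\beta<\alpha}\mathcal{V}^{(\beta)}$ at limits, and the index $o(\mathcal{V})=\min\{\alpha:\mathcal{V}^{(\alpha)}=\emptyset\}$ (with $o(\mathcal{V})=\infty\ge\omega_1$ if no such ordinal exists). For $C>0$, $\mathcal{V}(M,\mathbb{Q},C)$ is the set of all $(x_f)_{f\in[\mathbb{Q},G]}$, $G\in[\mathbb{N}]^{<\omega}$, $x_f\in M$, with $\frac1C\|f-g\|_\infty\le d(x_f,x_g)\le C\|f-g\|_\infty$ for all $f,g\in[\mathbb{Q},G]$. The Lipschitz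 $c_0$-index is $\mathrm{I}^{\mathrm{Lip}}_{c_0}(M)=\sup\{o(\mathcal{V}(M,\mathbb{Q},C)):C>0\}$. *)

theory Defs
  imports "HOL-Analysis.Analysis"
begin

definition c0 :: "(nat \<Rightarrow> real) set" where
  "c0 = {x. x \<longlonglongrightarrow> 0}"

definition supnorm :: "(nat \<Rightarrow> real) \<Rightarrow> real" where
  "supnorm x = (SUP n. \<bar>x n\<bar>)"

definition c0_bilip_embeds :: "'a::metric_space itself \<Rightarrow> bool" where
  "c0_bilip_embeds _ \<longleftrightarrow>
     (\<exists>(F :: (nat \<Rightarrow> real) \<Rightarrow> 'a) C. C > 0 \<and>
        (\<forall>x\<in>c0. \<forall>y\<in>c0.
           (1 / C) * supnorm (\<lambda>n. x n - y n) \<le> dist (F x) (F y) \<and>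
           dist (F x) (F y) \<le> C * supnorm (\<lambda>n. x n - y n)))"

definition fns :: "real set \<Rightarrow> nat set \<Rightarrow> (nat \<Rightarrow> real) set" where
  "fns E G = {f. (\<forall>n. f n \<in> E) \<and> (\<forall>n. f n \<noteq> 0 \<longrightarrow> n \<in> G)}"

text \<open>A bunch (x_f)_{f \<in> [E,G]} is represented by the pair (G, x) where x is
  extensional: undefined outside [E,G].\<close>
type_synonym 'a bunch = "nat set \<times> ((nat \<Rightarrow> real) \<Rightarrow> 'a)"

definition initial_segment :: "nat set \<Rightarrow> nat set \<Rightarrow> bool" where
  "initial_segment F G \<longleftrightarrow> F \<subseteq> G \<and> (\<forall>m\<in>F. \<forall>n\<in>G. n < m \<longrightarrow> n \<in> F)"

definition bunch_le :: "real set \<Rightarrow> 'a bunch \<Rightarrow> 'a bunch \<Rightarrow> bool" where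
  "bunch_le E p q \<longleftrightarrow> initial_segment (fst p) (fst q) \<and>
      (\<forall>f\<in>fns E (fst p). snd q f = snd p f)"

definition deriv1 :: "real set \<Rightarrow> 'a bunch set \<Rightarrow> 'a bunch set" where
  "deriv1 E S = {p\<in>S. \<exists>q\<in>S. bunch_le E p q \<and> p \<noteq> q}"

text \<open>Transfinite derivatives, indexed by the elements of a well-order r:
  for a in Field r, with \<alpha> the order type of the strict initial segment
  below a, deriv_at E r V a = V^(\<alpha>).  The recursion
  V^(\<alpha>) = V \<inter> \<Inter>_{\<beta><\<alpha>} (V^(\<beta>))^(1)
  gives V^(0) = V, V^(\<beta>+1) = (V^(\<beta>))^(1), and intersections at limits.\<close>
definition deriv_at :: "real set \<Rightarrow> 'i rel \<Rightarrow> 'a bunch set \<Rightarrow> 'i \<Rightarrow> 'a bunch set" where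
  "deriv_at E r V = wfrec (r - Id) (\<lambda>H a. V \<inter> (\<Inter>b\<in>{b. (b, a) \<in> r - Id}. deriv1 E (H b)))"

definition Vlip :: "'a::metric_space itself \<Rightarrow> real \<Rightarrow> 'a bunch set" where
  "Vlip _ C = {(G, x). finite G \<and> (\<forall>f. f \<notin> fns \<rat> G \<longrightarrow> x f = undefined) \<and>
      (\<forall>f\<in>fns \<rat> G. \<forall>g\<in>fns \<rat> G.
         (1 / C) * supnorm (\<lambda>n. f n - g n) \<le> dist (x f) (x g) \<and>
         dist (x f) (x g) \<le> C * supnorm (\<lambda>n. f n - g n))}"

text \<open>I^Lip_{c_0}(M) = sup_C o(V(M,Q,C)) \<ge> \<omega>_1.  Since \<omega>_1 is a limit ordinal,
  this holds iff for every countable ordinal \<alpha> there is C > 0 with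
  o(V(M,Q,C)) > \<alpha>, i.e. V(M,Q,C)^(\<alpha>) \<noteq> {}.  Countable ordinals \<alpha> are exactly the
  order types of strict initial segments {b. b <_r a} for well-orders r on
  subsets of nat and a \<in> Field r.\<close>
definition Lip_c0_index_ge_omega1 :: "'a::metric_space itself \<Rightarrow> bool" where
  "Lip_c0_index_ge_omega1 T \<longleftrightarrow>
     (\<forall>r :: nat rel. Well_order r \<longrightarrow>
        (\<forall>a\<in>Field r. \<exists>C>0. deriv_at \<rat> r (Vlip T C) a \<noteq> {}))"

end

theory Submission
  imports Defs
begin



lemma deriv_at_unfold:
  assumes "wf (r - Id)"
  shows "deriv_at E r V a = V \<inter> (\<Inter>b\<in>{b. (b, a) \<in> r - Id}. deriv1 E (deriv_at E r V b))"
  unfolding deriv_at_def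
  by (subst wfrec[OF assms]) (simp add: cut_apply)

lemma Well_order_wf: "Well_order r \<Longrightarrow> wf (r - Id)"
  by (simp add: well_order_on_def)

lemma fns_finite_supp_c0:
  assumes "finite G" "f \<in> fns E G"
  shows "f \<in> c0"
proof -
  have "eventually (\<lambda>n. f n = 0) sequentially"
    unfolding eventually_sequentially
  proof (intro exI allI impI)
    fix n assume "Suc (Max (insert 0 G)) \<le> n"
    then have "n \<notin> G" using assms(1) Max_ge[of "insert 0 G"] by fastforce
    then show "f n = 0" using assms(2) by (auto simp: fns_def)
  qed
  then show ?thesis unfolding c0_def by (simp add: tendsto_eventually)
qed

lemma forward:
  assumes "c0_bilip_embeds TYPE('a::metric_space)"
  shows "Lip_c0_index_ge_omega1 TYPE('a)"
proof -
  obtain F :: "(nat \<Rightarrow> real) \<Rightarrow> 'a" and C where C: "C > 0" and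
    FC: "\<forall>x\<in>c0. \<forall>y\<in>c0. (1 / C) * supnorm (\<lambda>n. x n - y n) \<le> dist (F x) (F y) \<and>
           dist (F x) (F y) \<le> C * supnorm (\<lambda>n. x n - y n)"
    using assms unfolding c0_bilip_embeds_def by blast
  define W :: "'a bunch set" where "W = {(G, \<lambda>f. if f \<in> fns \<rat> G then F f else undefined) | G. finite G}"
  have WV: "W \<subseteq> Vlip TYPE('a) C"
  proof
    fix p assume "p \<in> W"
    then obtain G where G: "finite G" "p = (G, \<lambda>f. if f \<in> fns \<rat> G then F f else undefined)"
      unfolding W_def by blast
    have "\<forall>f\<in>fns \<rat> G. \<forall>g\<in>fns \<rat> G.
         (1 / C) * supnorm (\<lambda>n. f n - g n) \<le> dist (F f) (F g) \<and>
         dist (F f) (F g) \<le> C * supnorm (\<lambda>n. f n - g n)"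
      using FC fns_finite_supp_c0[OF G(1)] by blast
    then show "p \<in> Vlip TYPE('a) C" unfolding Vlip_def G(2) using G(1) by simp
  qed
  have Wext: "\<exists>q\<in>W. bunch_le \<rat> p q \<and> p \<noteq> q" if "p \<in> W" for p
  proof -
    obtain G where G: "finite G" "p = (G, \<lambda>f. if f \<in> fns \<rat> G then F f else undefined)"
      using \<open>p \<in> W\<close> unfolding W_def by blast
    define m where "m = Suc (Max (insert 0 G))"
    have mG: "\<And>x. x \<in> G \<Longrightarrow> x < m" proof -
      fix x assume "x \<in> G"
      then have "x \<le> Max (insert 0 G)" using G(1) by simp
      then show "x < m" unfolding m_def by simp
    qed
    define q where "q = (insert m G, \<lambda>f. if f \<in> fns \<rat> (insert m G) then F f else undefined)"
    have "q \<in> W" unfolding q_def W_def using G by auto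
    moreover have "initial_segment G (insert m G)"
      unfolding initial_segment_def using mG by fastforce
    moreover have "fns \<rat> G \<subseteq> fns \<rat> (insert m G)" unfolding fns_def by auto
    moreover have "p \<noteq> q" using mG G(2) unfolding q_def by auto
    ultimately show ?thesis unfolding bunch_le_def using G(2) q_def by (intro bexI[of _ q]) auto
  qed
  show ?thesis unfolding Lip_c0_index_ge_omega1_def
  proof (intro allI impI ballI)
    fix r :: "nat rel" and a assume r: "Well_order r" and "a \<in> Field r"
    have wf: "wf (r - Id)" using Well_order_wf[OF r] .
    have "W \<subseteq> deriv_at \<rat> r (Vlip TYPE('a) C) b" for b
    proof (induction b rule: wf_induct[OF wf])
      case (1 b)
      show ?case
      proof
        fix p assume "p \<in> W"
        have "p \<in> deriv1 \<rat> (deriv_at \<rat> r (Vlip TYPE('a) C) c)" if "(c, b) \<in> r - Id" for c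
          using Wext[OF \<open>p \<in> W\<close>] 1[rule_format, OF that] \<open>p \<in> W\<close> unfolding deriv1_def by blast
        then show "p \<in> deriv_at \<rat> r (Vlip TYPE('a) C) b"
          using WV \<open>p \<in> W\<close> by (subst deriv_at_unfold[OF wf]) blast
      qed
    qed
    moreover have "({}, \<lambda>f. if f \<in> fns \<rat> {} then F f else undefined) \<in> W" unfolding W_def by auto
    ultimately show "\<exists>C>0. deriv_at \<rat> r (Vlip TYPE('a) C) a \<noteq> {}" using C by blast
  qed
qed




definition gtr :: "nat rel" where "gtr = {(a,b). b < a}"
definition kb :: "nat list \<Rightarrow> nat list \<Rightarrow> bool" where "kb s t \<longleftrightarrow> (t, s) \<in> lexord gtr"

lemma kb_cases:
  assumes "kb s' s"
  shows "(length s < length s' \<and> take (length s) s' = s) \<or>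
    (\<exists>j<min (length s) (length s'). take j s = take j s' \<and> s' ! j < s ! j)"
  using assms unfolding kb_def lexord_take_index_conv gtr_def by auto

lemma agree_nth:
  assumes "take i xs = take i ys" "j < i" "j < length xs" "j < length ys"
  shows "xs ! j = ys ! j"
proof -
  have "take i xs ! j = xs ! j" by (rule nth_take[OF assms(2)])
  moreover have "take i ys ! j = ys ! j" by (rule nth_take[OF assms(2)])
  ultimately show ?thesis using assms(1) by metis
qed

lemma kb_step:
  assumes "kb s' s" "i < length s" "i \<le> length s'" "take i s' = take i s"
  shows "i < length s' \<and> s' ! i \<le> s ! i"
  using kb_cases[OF assms(1)]
proof
  assume h: "length s < length s' \<and> take (length s) s' = s"
  have "take (length s) s' ! i = s' ! i" by (rule nth_take[OF assms(2)])
  then have "s' ! i = s ! i" using h by simp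
  then show ?thesis using h assms(2) by simp
next
  assume "\<exists>j<min (length s) (length s'). take j s = take j s' \<and> s' ! j < s ! j"
  then obtain j where j: "j < length s" "j < length s'" "take j s = take j s'" "s' ! j < s ! j" by auto
  have "\<not> j < i" using agree_nth[OF assms(4), of j] j by auto
  then have ij: "i \<le> j" by simp
  show ?thesis
  proof (cases "i = j")
    case True then show ?thesis using j by simp
  next
    case False
    then have "s ! i = s' ! i" using agree_nth[OF j(3), of i] ij j by simp
    then show ?thesis using ij j by simp
  qed
qed

lemma kb_step0:
  assumes "kb s' s" "i = length s" "i \<le> length s'" "take i s' = take i s"
  shows "i < length s'"
  using kb_cases[OF assms(1)]
proof
  assume "\<exists>j<min (length s) (length s'). take j s = take j s' \<and> s' ! j < s ! j"
  then obtain j where j: "j < length s" "j < length s'" "take j s = take j s'" "s' ! j < s ! j" by auto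
  then show ?thesis using agree_nth[OF assms(4), of j] assms(2) by auto
qed (use assms in auto)

lemma antitone_from:
  fixes g :: "nat \<Rightarrow> nat"
  assumes "\<And>k. k \<ge> K \<Longrightarrow> g (Suc k) \<le> g k" "K \<le> a" "a \<le> b"
  shows "g b \<le> g a"
  using assms(3)
proof (induction b rule: dec_induct)
  case (step n) then show ?case using assms(1)[of n] assms(2) by simp
qed simp

lemma kb_branch_H:
  assumes ch: "\<And>k. kb (s (Suc k)) (s k)"
  shows "\<exists>K. \<forall>k\<ge>K. i \<le> length (s k) \<and> take i (s k) = take i (s K)"
proof (induction i)
  case 0 then show ?case by auto
next
  case (Suc i)
  then obtain K where K: "\<And>k. k \<ge> K \<Longrightarrow> i \<le> length (s k) \<and> take i (s k) = take i (s K)" by blast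
  have agr: "take i (s (Suc k)) = take i (s k)" if "k \<ge> K" for k
    using K[of k] K[of "Suc k"] that by simp
  obtain K1 where K1: "K1 \<ge> K" "i < length (s K1)"
  proof (cases "i < length (s K)")
    case True then show ?thesis using that[of K] by simp
  next
    case False
    then have "i = length (s K)" using K[of K] by simp
    then have "i < length (s (Suc K))"
      using kb_step0[OF ch[of K], of i] K[of "Suc K"] agr[of K] by simp
    then show ?thesis using that[of "Suc K"] by simp
  qed
  have len: "i < length (s k)" if "k \<ge> K1" for k
    using that
  proof (induction k rule: dec_induct)
    case base then show ?case using K1 by simp
  next
    case (step k)
    then show ?case using kb_step[OF ch[of k], of i] K[of "Suc k"] agr[of k] K1 by simp
  qed
  define g where "g k = s k ! i" for k
  have gdec: "g (Suc k) \<le> g k" if "k \<ge> K1" for k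
    using kb_step[OF ch[of k], of i] len[OF that] K[of "Suc k"] agr[of k] K1 that
    unfolding g_def by simp
  define v where "v = (LEAST v. \<exists>k\<ge>K1. g k = v)"
  have "\<exists>k\<ge>K1. g k = v" unfolding v_def by (rule LeastI[of _ "g K1"]) auto
  then obtain K2 where K2: "K2 \<ge> K1" "g K2 = v" by blast
  have gconst: "g k = g K2" if "k \<ge> K2" for k
  proof -
    have "g k \<le> g K2" using antitone_from[of K1 g K2 k] gdec K2 that by simp
    have "\<exists>ka\<ge>K1. g ka = g k" using that K2(1) by (intro exI[of _ k]) simp
    then have "v \<le> g k" unfolding v_def by (rule Least_le)
    moreover note \<open>g k \<le> g K2\<close>
    ultimately show ?thesis using K2 by simp
  qed
  show ?case
  proof (intro exI allI impI)
    fix k assume k: "K2 \<le> k"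
    have "take (Suc i) (s k) = take i (s k) @ [g k]"
      using len[of k] k K2 unfolding g_def by (simp add: take_Suc_conv_app_nth)
    moreover have "take (Suc i) (s K2) = take i (s K2) @ [g K2]"
      using len[of K2] K2 unfolding g_def by (simp add: take_Suc_conv_app_nth)
    moreover have "take i (s k) = take i (s K2)" using K[of k] K[of K2] k K2 K1 by simp
    ultimately show "Suc i \<le> length (s k) \<and> take (Suc i) (s k) = take (Suc i) (s K2)"
      using gconst[OF k] len[of k] k K2 by simp
  qed
qed

lemma kb_branch:
  assumes ch: "\<And>k. kb (s (Suc k)) (s k)"
  shows "\<exists>b. \<forall>i. \<exists>k. i \<le> length (s k) \<and> take i (s k) = map b [0..<i]"
proof -
  obtain Kf where Kf: "\<And>i k. k \<ge> Kf i \<Longrightarrow> i \<le> length (s k) \<and> take i (s k) = take i (s (Kf i))"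
    using kb_branch_H[of s, OF ch] by metis
  define b where "b j = s (Kf (Suc j)) ! j" for j
  show ?thesis
  proof (rule exI, rule allI)
    fix i
    define k where "k = (\<Sum>j<i. Kf (Suc j))"
    have kge: "Kf (Suc j) \<le> k" if "j < i" for j
      unfolding k_def using that by (intro member_le_sum) auto
    have li: "i \<le> length (s k)"
    proof (cases i)
      case 0 then show ?thesis by simp
    next
      case (Suc i') then show ?thesis using Kf[of "Suc i'" k] kge[of i'] by simp
    qed
    have "take i (s k) = map b [0..<i]"
    proof (rule nth_equalityI)
      show "length (take i (s k)) = length (map b [0..<i])" using li by simp
    next
      fix j assume "j < length (take i (s k))"
      then have j: "j < i" using li by simp
      have "s k ! j = s (Kf (Suc j)) ! j"
        using agree_nth[of "Suc j" "s k" "s (Kf (Suc j))" j] Kf[of "Suc j" k] Kf[of "Suc j" "Kf (Suc j)"] kge[OF j]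
        by simp
      then show "take i (s k) ! j = map b [0..<i] ! j" using j unfolding b_def by simp
    qed
    then show "\<exists>k. i \<le> length (s k) \<and> take i (s k) = map b [0..<i]" using li by blast
  qed
qed




lemma trans_gtr: "trans gtr" unfolding gtr_def trans_def by auto

lemma kb_irrefl: "\<not> kb s s"
  unfolding kb_def by (rule lexord_irreflexive) (simp add: gtr_def)

lemma kb_trans: "kb x y \<Longrightarrow> kb y z \<Longrightarrow> kb x z"
  unfolding kb_def using lexord_trans trans_gtr by blast

lemma kb_linear: "kb x y \<or> x = y \<or> kb y x"
proof -
  have "\<forall>a b. (a,b) \<in> gtr \<or> a = b \<or> (b,a) \<in> gtr" by (auto simp: gtr_def)
  from lexord_linear[OF this, of y x] show ?thesis unfolding kb_def by blast
qed

lemma kb_nil: "s \<noteq> [] \<Longrightarrow> kb s []"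
  unfolding kb_def lexord_take_index_conv by simp

lemma kb_prefix: "length s < length s' \<Longrightarrow> take (length s) s' = s \<Longrightarrow> kb s' s"
  unfolding kb_def lexord_take_index_conv by simp

definition kbw :: "nat list set \<Rightarrow> nat list rel" where
  "kbw A = {(x,y). x \<in> A \<and> y \<in> A \<and> (x = y \<or> kb x y)}"

lemma Field_kbw: "Field (kbw A) = A"
  unfolding kbw_def Field_def by auto

lemma kbw_Well_order:
  assumes noch: "\<not> (\<exists>s. \<forall>k. s k \<in> A \<and> kb (s (Suc k)) (s k))"
  shows "Well_order (kbw A)"
proof -
  have refl: "refl_on (Field (kbw A)) (kbw A)"
    unfolding refl_on_def Field_kbw by (auto simp: kbw_def)
  have tr: "trans (kbw A)"
    unfolding trans_def kbw_def using kb_trans[of _ _ ] by (smt (verit) case_prodD case_prodI mem_Collect_eq)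
  have an: "antisym (kbw A)"
    unfolding antisym_def kbw_def using kb_trans kb_irrefl by (smt (verit) case_prodD mem_Collect_eq)
  have tot: "total_on (Field (kbw A)) (kbw A)"
    unfolding total_on_def Field_kbw using kb_linear by (auto simp: kbw_def)
  have "wf (kbw A - Id)"
    unfolding wf_iff_no_infinite_down_chain
  proof
    assume "\<exists>f. \<forall>i. (f (Suc i), f i) \<in> kbw A - Id"
    then obtain f where f: "\<And>i. (f (Suc i), f i) \<in> kbw A - Id" by blast
    have "\<forall>k. f k \<in> A \<and> kb (f (Suc k)) (f k)"
      using f unfolding kbw_def by auto
    then show False using noch by blast
  qed
  moreover have "kbw A \<subseteq> Field (kbw A) \<times> Field (kbw A)" unfolding Field_kbw by (auto simp: kbw_def)
  ultimately show ?thesis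
    by (simp add: well_order_on_def linear_order_on_def partial_order_on_def preorder_on_def refl tr an tot)
qed

definition kbr :: "nat list set \<Rightarrow> nat rel" where
  "kbr A = dir_image (kbw A) to_nat"

lemma kbr_Well_order:
  assumes "\<not> (\<exists>s. \<forall>k. s k \<in> A \<and> kb (s (Suc k)) (s k))"
  shows "Well_order (kbr A)"
  unfolding kbr_def
  by (rule Well_order_dir_image[OF kbw_Well_order[OF assms]]) (simp add: inj_on_def)

lemma kbr_mem: "x \<in> A \<Longrightarrow> y \<in> A \<Longrightarrow> kb x y \<Longrightarrow> (to_nat x, to_nat y) \<in> kbr A - Id"
  unfolding kbr_def dir_image_def kbw_def using kb_irrefl by auto

lemma deriv_empty:
  fixes V :: "'a bunch set" and code :: "'a bunch \<Rightarrow> nat list"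
  assumes noch: "\<not> (\<exists>s. \<forall>k. s k \<in> A \<and> kb (s (Suc k)) (s k))"
    and codeA: "\<And>p. p \<in> V \<Longrightarrow> code p \<in> A"
    and nilA: "[] \<in> A"
    and codene: "\<And>p. p \<in> V \<Longrightarrow> code p \<noteq> []"
    and mono: "\<And>p q. p \<in> V \<Longrightarrow> q \<in> V \<Longrightarrow> bunch_le E p q \<Longrightarrow> p \<noteq> q \<Longrightarrow> kb (code q) (code p)"
  shows "deriv_at E (kbr A) V (to_nat ([]::nat list)) = {}"
proof -
  have wf: "wf (kbr A - Id)" using Well_order_wf[OF kbr_Well_order[OF noch]] .
  have claim: "\<forall>p\<in>deriv_at E (kbr A) V s. (to_nat (code p), s) \<notin> kbr A - Id" for s
  proof (induction s rule: wf_induct[OF wf])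
    case (1 s)
    show ?case
    proof (intro ballI notI)
      fix p assume p: "p \<in> deriv_at E (kbr A) V s" and ps: "(to_nat (code p), s) \<in> kbr A - Id"
      have "p \<in> deriv1 E (deriv_at E (kbr A) V (to_nat (code p)))"
        using p ps by (subst (asm) deriv_at_unfold[OF wf]) blast
      then obtain q where q: "q \<in> deriv_at E (kbr A) V (to_nat (code p))" "bunch_le E p q" "p \<noteq> q"
        and pD: "p \<in> deriv_at E (kbr A) V (to_nat (code p))"
        unfolding deriv1_def by blast
      have pV: "p \<in> V" using p by (subst (asm) deriv_at_unfold[OF wf]) blast
      have qV: "q \<in> V" using q(1) by (subst (asm) deriv_at_unfold[OF wf]) blast
      have "(to_nat (code q), to_nat (code p)) \<in> kbr A - Id"
        using kbr_mem[OF codeA[OF qV] codeA[OF pV] mono[OF pV qV q(2,3)]] .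
      then show False using 1[rule_format, OF ps] q(1) by blast
    qed
  qed
  show ?thesis
  proof (rule ccontr)
    assume "deriv_at E (kbr A) V (to_nat ([]::nat list)) \<noteq> {}"
    then obtain p where p: "p \<in> deriv_at E (kbr A) V (to_nat ([]::nat list))" by blast
    have pV: "p \<in> V" using p by (subst (asm) deriv_at_unfold[OF wf]) blast
    have "(to_nat (code p), to_nat ([]::nat list)) \<in> kbr A - Id"
      using kbr_mem[OF codeA[OF pV] nilA kb_nil[OF codene[OF pV]]] .
    then show False using claim[of "to_nat ([]::nat list)"] p by blast
  qed
qed

lemma nil_Field: "[] \<in> A \<Longrightarrow> to_nat ([]::nat list) \<in> Field (kbr A)"
  unfolding kbr_def dir_image_def kbw_def Field_def by blast




definition bnd :: "(nat \<Rightarrow> real) \<Rightarrow> bool" where "bnd u \<longleftrightarrow> (\<exists>B. \<forall>k. \<bar>u k\<bar> \<le> B)"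

lemma supnorm_le: "(\<And>k. \<bar>u k\<bar> \<le> B) \<Longrightarrow> supnorm u \<le> B"
  unfolding supnorm_def by (rule cSUP_least) auto

lemma supnorm_ge: "bnd u \<Longrightarrow> \<bar>u k\<bar> \<le> supnorm u"
proof -
  assume "bnd u"
  then obtain B where B: "\<And>k. \<bar>u k\<bar> \<le> B" unfolding bnd_def by blast
  have "bdd_above (range (\<lambda>k. \<bar>u k\<bar>))" by (rule bdd_aboveI2[of _ _ B]) (rule B)
  then show ?thesis unfolding supnorm_def by (rule cSUP_upper[OF UNIV_I])
qed

lemma bnd_diff: "bnd u \<Longrightarrow> bnd v \<Longrightarrow> bnd (\<lambda>k. u k - v k)"
  unfolding bnd_def
proof (elim exE)
  fix B1 B2 assume "\<forall>k. \<bar>u k\<bar> \<le> B1" "\<forall>k. \<bar>v k\<bar> \<le> B2"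
  then have "\<forall>k. \<bar>u k - v k\<bar> \<le> B1 + B2"
  proof (intro allI)
    fix k assume "\<forall>k. \<bar>u k\<bar> \<le> B1" "\<forall>k. \<bar>v k\<bar> \<le> B2"
    then have "\<bar>u k\<bar> \<le> B1" "\<bar>v k\<bar> \<le> B2" by auto
    then show "\<bar>u k - v k\<bar> \<le> B1 + B2" by linarith
  qed
  then show "\<exists>B. \<forall>k. \<bar>u k - v k\<bar> \<le> B" by blast
qed

lemma supnorm_diff:
  assumes "bnd u" "bnd v"
  shows "\<bar>supnorm u - supnorm v\<bar> \<le> supnorm (\<lambda>k. u k - v k)"
proof -
  have b: "bnd (\<lambda>k. u k - v k)" "bnd (\<lambda>k. v k - u k)" using bnd_diff assms by auto
  have "supnorm u \<le> supnorm v + supnorm (\<lambda>k. u k - v k)"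
  proof (rule supnorm_le)
    fix k
    have "\<bar>v k\<bar> \<le> supnorm v" using supnorm_ge[OF assms(2)] .
    moreover have "\<bar>u k - v k\<bar> \<le> supnorm (\<lambda>k. u k - v k)" using supnorm_ge[OF b(1)] by simp
    ultimately show "\<bar>u k\<bar> \<le> supnorm v + supnorm (\<lambda>k. u k - v k)" by linarith
  qed
  moreover have "supnorm v \<le> supnorm u + supnorm (\<lambda>k. u k - v k)"
  proof (rule supnorm_le)
    fix k
    have "\<bar>u k\<bar> \<le> supnorm u" using supnorm_ge[OF assms(1)] .
    moreover have "\<bar>u k - v k\<bar> \<le> supnorm (\<lambda>k. u k - v k)" using supnorm_ge[OF b(1)] by simp
    ultimately show "\<bar>v k\<bar> \<le> supnorm u + supnorm (\<lambda>k. u k - v k)" by linarith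
  qed
  ultimately show ?thesis by linarith
qed

lemma c0_bnd: "z \<in> c0 \<Longrightarrow> bnd z"
proof -
  assume "z \<in> c0"
  then have "Bseq z" unfolding c0_def using convergent_imp_Bseq convergentI by blast
  then obtain K where "\<forall>n. norm (z n) \<le> K" unfolding Bseq_def by blast
  then show "bnd z" unfolding bnd_def by auto
qed

definition qvec :: "rat list \<Rightarrow> nat \<Rightarrow> real" where
  "qvec c k = (if k < length c then of_rat (c ! k) else 0)"

lemma qvec_c0: "qvec c \<in> c0"
proof -
  have "eventually (\<lambda>k. qvec c k = 0) sequentially"
    unfolding eventually_sequentially qvec_def by (intro exI[of _ "length c"]) auto
  then show ?thesis unfolding c0_def by (simp add: tendsto_eventually)
qed

lemma qvec_approx:
  assumes "z \<in> c0" "e > 0"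
  shows "\<exists>c. \<forall>k. \<bar>z k - qvec c k\<bar> \<le> e"
proof -
  have "\<forall>r>0. \<exists>no. \<forall>n\<ge>no. norm (z n - 0) < r" using assms(1) unfolding c0_def LIMSEQ_iff by simp
  then obtain N where N0: "\<forall>k\<ge>N. norm (z k - 0) < e" using assms(2) by blast
  have N: "\<And>k. k \<ge> N \<Longrightarrow> \<bar>z k\<bar> < e" using N0 by simp
  have "\<forall>k. \<exists>q. z k < of_rat q \<and> of_rat q < z k + e" using of_rat_dense assms(2) by simp
  then obtain q where q: "\<And>k. z k < of_rat (q k) \<and> of_rat (q k) < z k + e" by metis
  define c where "c = map q [0..<N]"
  have "\<bar>z k - qvec c k\<bar> \<le> e" for k
  proof (cases "k < N")
    case True then show ?thesis using q[of k] unfolding qvec_def c_def by auto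
  next
    case False then show ?thesis using N[of k] unfolding qvec_def c_def by auto
  qed
  then show ?thesis by blast
qed

definition ap :: "(nat \<Rightarrow> real) \<Rightarrow> nat \<Rightarrow> rat list" where
  "ap z m = (SOME c. \<forall>k. \<bar>z k - qvec c k\<bar> \<le> 1 / real (Suc m))"

lemma ap_prop: "z \<in> c0 \<Longrightarrow> \<bar>z k - qvec (ap z m) k\<bar> \<le> 1 / real (Suc m)"
  unfolding ap_def using someI_ex[OF qvec_approx[of z "1 / real (Suc m)"]] by simp

lemma ap_sigma:
  assumes z: "z \<in> c0" and z': "z' \<in> c0"
  shows "\<bar>supnorm (\<lambda>k. qvec (ap z m) k - qvec (ap z' m') k) - supnorm (\<lambda>k. z k - z' k)\<bar>
     \<le> 1 / real (Suc m) + 1 / real (Suc m')"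
proof -
  have b1: "bnd (\<lambda>k. qvec (ap z m) k - qvec (ap z' m') k)" using bnd_diff c0_bnd qvec_c0 by blast
  have b2: "bnd (\<lambda>k. z k - z' k)" using bnd_diff c0_bnd z z' by blast
  have "supnorm (\<lambda>k. (qvec (ap z m) k - qvec (ap z' m') k) - (z k - z' k)) \<le> 1 / real (Suc m) + 1 / real (Suc m')"
  proof (rule supnorm_le)
    fix k show "\<bar>qvec (ap z m) k - qvec (ap z' m') k - (z k - z' k)\<bar> \<le> 1 / real (Suc m) + 1 / real (Suc m')"
      using ap_prop[OF z, of k m] ap_prop[OF z', of k m'] by linarith
  qed
  then show ?thesis using supnorm_diff[OF b1 b2] by linarith
qed

lemma inv_Suc_small: "e > 0 \<Longrightarrow> \<exists>M. \<forall>m\<ge>M. 1 / real (Suc m) < e"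
proof -
  assume e: "e > 0"
  obtain M where M: "1 / e < real M" using reals_Archimedean2 by blast
  have "1 / real (Suc m) < e" if "m \<ge> M" for m
  proof -
    have "1 / e < real (Suc m)" using M that by simp
    then show ?thesis using e by (simp add: field_simps)
  qed
  then show ?thesis by blast
qed

lemma stage2:
  fixes Y :: "rat list \<Rightarrow> 'a::complete_space"
  assumes n: "(n::real) > 0"
    and Y: "\<And>c c'. (1/n) * supnorm (\<lambda>k. qvec c k - qvec c' k) \<le> dist (Y c) (Y c') \<and>
                   dist (Y c) (Y c') \<le> n * supnorm (\<lambda>k. qvec c k - qvec c' k)"
  shows "c0_bilip_embeds TYPE('a)"
proof -
  have sig0: "supnorm (\<lambda>k. z k - z k) = 0" for z by (simp add: supnorm_def)
  have cauchy: "Cauchy (\<lambda>m. Y (ap z m))" if z: "z \<in> c0" for z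
    unfolding Cauchy_def
  proof (intro allI impI)
    fix e :: real assume e: "e > 0"
    obtain M where M: "\<And>m. m \<ge> M \<Longrightarrow> 1 / real (Suc m) < e / (2 * n)"
      using inv_Suc_small[of "e / (2 * n)"] e n by auto
    show "\<exists>M. \<forall>m\<ge>M. \<forall>m'\<ge>M. dist (Y (ap z m)) (Y (ap z m')) < e"
    proof (intro exI allI impI)
      fix m m' assume mm: "M \<le> m" "M \<le> m'"
      have "supnorm (\<lambda>k. qvec (ap z m) k - qvec (ap z m') k) \<le> 1 / real (Suc m) + 1 / real (Suc m')"
        using ap_sigma[OF z z, of m m'] sig0[of z] by simp
      also have "\<dots> < e / (2 * n) + e / (2 * n)" using M[OF mm(1)] M[OF mm(2)] by linarith
      also have "\<dots> = e / n" using n by (simp add: field_simps)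
      finally have "n * supnorm (\<lambda>k. qvec (ap z m) k - qvec (ap z m') k) < e"
        using n by (simp add: field_simps)
      then show "dist (Y (ap z m)) (Y (ap z m')) < e" using Y[of "ap z m" "ap z m'"] by linarith
    qed
  qed
  define F where "F z = lim (\<lambda>m. Y (ap z m))" for z
  have Flim: "(\<lambda>m. Y (ap z m)) \<longlonglongrightarrow> F z" if "z \<in> c0" for z
    unfolding F_def using Cauchy_convergent[OF cauchy[OF that]] convergent_LIMSEQ_iff by blast
  have "\<forall>z\<in>c0. \<forall>z'\<in>c0.
           (1 / n) * supnorm (\<lambda>k. z k - z' k) \<le> dist (F z) (F z') \<and>
           dist (F z) (F z') \<le> n * supnorm (\<lambda>k. z k - z' k)"
  proof (intro ballI)
    fix z z' assume z: "z \<in> c0" and z': "z' \<in> c0"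
    define s where "s m = supnorm (\<lambda>k. qvec (ap z m) k - qvec (ap z' m) k)" for m
    define t where "t = supnorm (\<lambda>k. z k - z' k)"
    have "(\<lambda>m. s m - t) \<longlonglongrightarrow> 0"
    proof (rule Lim_null_comparison)
      show "\<forall>\<^sub>F m in sequentially. norm (s m - t) \<le> 2 * inverse (real (Suc m))"
      proof (rule always_eventually, rule allI)
        fix m
        have "\<bar>s m - t\<bar> \<le> 1 / real (Suc m) + 1 / real (Suc m)"
          using ap_sigma[OF z z', of m m] unfolding s_def t_def by simp
        then show "norm (s m - t) \<le> 2 * inverse (real (Suc m))" by (simp add: divide_inverse)
      qed
      show "(\<lambda>m. 2 * inverse (real (Suc m))) \<longlonglongrightarrow> 0"
        using tendsto_mult_right_zero[OF LIMSEQ_inverse_real_of_nat, of 2] by simp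
    qed
    then have st: "s \<longlonglongrightarrow> t" using tendsto_add_const_iff[of t "\<lambda>m. s m - t" 0] by simp
    have dl: "(\<lambda>m. dist (Y (ap z m)) (Y (ap z' m))) \<longlonglongrightarrow> dist (F z) (F z')"
      using tendsto_dist[OF Flim[OF z] Flim[OF z']] .
    have Ym: "(1/n) * s m \<le> dist (Y (ap z m)) (Y (ap z' m)) \<and> dist (Y (ap z m)) (Y (ap z' m)) \<le> n * s m" for m
      unfolding s_def by (rule Y)
    have "(1/n) * t \<le> dist (F z) (F z')"
      by (rule LIMSEQ_le[OF tendsto_mult_left[OF st] dl]) (use Ym in blast)
    moreover have "dist (F z) (F z') \<le> n * t"
      by (rule LIMSEQ_le[OF dl tendsto_mult_left[OF st]]) (use Ym in blast)
    ultimately show "(1 / n) * supnorm (\<lambda>k. z k - z' k) \<le> dist (F z) (F z') \<and>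
           dist (F z) (F z') \<le> n * supnorm (\<lambda>k. z k - z' k)" unfolding t_def by simp
  qed
  then show ?thesis unfolding c0_bilip_embeds_def by (intro exI[of _ F] exI[of _ n] conjI n)
qed




definition approx :: "(nat \<Rightarrow> 'a::metric_space) \<Rightarrow> nat \<Rightarrow> 'a \<Rightarrow> nat" where
  "approx \<delta> i y = (LEAST m. dist (\<delta> m) y < 1 / real (Suc i))"

fun fc :: "nat list \<Rightarrow> rat list \<Rightarrow> nat \<Rightarrow> real" where
  "fc (s#S) (a#c) = (fc S c)(s := of_rat a)"
| "fc [] c = (\<lambda>_. 0)"
| "fc (s#S) [] = (\<lambda>_. 0)"

definition entry :: "(nat \<Rightarrow> 'a::metric_space) \<Rightarrow> nat list \<Rightarrow> ((nat \<Rightarrow> real) \<Rightarrow> 'a) \<Rightarrow> nat \<Rightarrow> nat" where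
  "entry \<delta> Gs x i = to_nat (Gs ! i,
     map (\<lambda>j. approx \<delta> i (x (fc (take (Suc i) Gs) (from_nat j :: rat list)))) [0..<Suc i])"

definition node :: "(nat \<Rightarrow> 'a::metric_space) \<Rightarrow> 'a bunch \<Rightarrow> nat list" where
  "node \<delta> p = map (entry \<delta> (sorted_list_of_set (fst p)) (snd p)) [0..<card (fst p)]"

lemma fc_out: "k \<notin> set S \<Longrightarrow> fc S c k = 0"
  by (induction S c rule: fc.induct) auto

lemma fc_fns: "fc S c \<in> fns \<rat> (set S)"
proof -
  have "(\<forall>n. fc S c n \<in> \<rat>) \<and> (\<forall>n. fc S c n \<noteq> 0 \<longrightarrow> n \<in> set S)"
    by (induction S c rule: fc.induct) auto
  then show ?thesis unfolding fns_def by auto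
qed

lemma fc_take: "fc S c = fc (take (length c) S) c"
  by (induction S c rule: fc.induct) auto

lemma fc_nth: "distinct S \<Longrightarrow> j < length S \<Longrightarrow> fc S c (S ! j) = qvec c j"
proof (induction S c arbitrary: j rule: fc.induct)
  case (1 s S a c)
  show ?case
  proof (cases j)
    case 0 then show ?thesis by (simp add: qvec_def)
  next
    case (Suc j')
    have "j' < length S" using 1(3) Suc by simp
    then have "S ! j' \<in> set S" by (rule nth_mem)
    moreover have "s \<notin> set S" using 1(2) by simp
    ultimately have "S ! j' \<noteq> s" by blast
    then show ?thesis using 1 Suc by (simp add: qvec_def)
  qed
next
  case (2 c) then show ?case by simp
next
  case (3 s S) then show ?case by (simp add: qvec_def)
qed

lemma supnorm_fc:
  assumes "distinct S" "length c \<le> length S" "length c' \<le> length S"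
  shows "supnorm (\<lambda>k. fc S c k - fc S c' k) = supnorm (\<lambda>k. qvec c k - qvec c' k)"
proof -
  let ?M = "insert 0 ((\<lambda>j. \<bar>qvec c j - qvec c' j\<bar>) ` {..<length S})"
  have "range (\<lambda>k. \<bar>fc S c k - fc S c' k\<bar>) = ?M"
  proof
    show "range (\<lambda>k. \<bar>fc S c k - fc S c' k\<bar>) \<subseteq> ?M"
    proof (rule image_subsetI)
      fix k
      show "\<bar>fc S c k - fc S c' k\<bar> \<in> ?M"
      proof (cases "k \<in> set S")
        case True
        then obtain j where j: "j < length S" "k = S ! j" by (metis in_set_conv_nth)
        then show ?thesis using fc_nth[OF assms(1) j(1)] by auto
      qed (simp add: fc_out)
    qed
    show "?M \<subseteq> range (\<lambda>k. \<bar>fc S c k - fc S c' k\<bar>)"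
    proof
      fix v assume "v \<in> ?M"
      then show "v \<in> range (\<lambda>k. \<bar>fc S c k - fc S c' k\<bar>)"
      proof
        assume "v = 0"
        obtain k where "k \<notin> set S" using ex_new_if_finite[of "set S"] by auto
        then show ?thesis using \<open>v = 0\<close> by (intro image_eqI[of _ _ k]) (simp_all add: fc_out)
      next
        assume "v \<in> (\<lambda>j. \<bar>qvec c j - qvec c' j\<bar>) ` {..<length S}"
        then obtain j where "j < length S" "v = \<bar>qvec c j - qvec c' j\<bar>" by auto
        then show ?thesis using fc_nth[OF assms(1)] by (intro image_eqI[of _ _ "S ! j"]) auto
      qed
    qed
  qed
  moreover have "range (\<lambda>k. \<bar>qvec c k - qvec c' k\<bar>) = ?M"
  proof
    show "range (\<lambda>k. \<bar>qvec c k - qvec c' k\<bar>) \<subseteq> ?M"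
    proof (rule image_subsetI)
      fix k
      show "\<bar>qvec c k - qvec c' k\<bar> \<in> ?M"
      proof (cases "k < length S")
        case False then show ?thesis using assms by (simp add: qvec_def)
      qed simp
    qed
    show "?M \<subseteq> range (\<lambda>k. \<bar>qvec c k - qvec c' k\<bar>)"
    proof
      fix v assume "v \<in> ?M"
      then show "v \<in> range (\<lambda>k. \<bar>qvec c k - qvec c' k\<bar>)"
      proof
        assume "v = 0"
        then show ?thesis using assms by (intro image_eqI[of _ _ "length S"]) (simp_all add: qvec_def)
      qed auto
    qed
  qed
  ultimately show ?thesis unfolding supnorm_def by simp
qed

lemma sorted_initial:
  assumes G: "finite G" and FG: "initial_segment F G"
  shows "sorted_list_of_set F = take (card F) (sorted_list_of_set G)"
proof -
  have sub: "F \<subseteq> G" and down: "\<And>m n. m \<in> F \<Longrightarrow> n \<in> G \<Longrightarrow> n < m \<Longrightarrow> n \<in> F"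
    using FG unfolding initial_segment_def by auto
  have F: "finite F" using finite_subset[OF sub G] .
  define L where "L = sorted_list_of_set F @ sorted_list_of_set (G - F)"
  have cross: "\<forall>x\<in>set (sorted_list_of_set F). \<forall>y\<in>set (sorted_list_of_set (G - F)). x < y"
  proof (intro ballI)
    fix x y assume "x \<in> set (sorted_list_of_set F)" "y \<in> set (sorted_list_of_set (G - F))"
    then have x: "x \<in> F" and y: "y \<in> G" "y \<notin> F" using F G by auto
    show "x < y"
    proof (rule ccontr)
      assume "\<not> x < y"
      then have "y < x" using x y by (cases "x = y") auto
      then show False using down[OF x y(1)] y(2) by blast
    qed
  qed
  have "sorted_wrt (<) L"
    unfolding L_def sorted_wrt_append using cross by (simp add: strict_sorted_list_of_set)
  moreover have "set L = G" unfolding L_def using F G sub by auto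
  moreover have "length L = card G" unfolding L_def using F G sub
    by (simp add: card_Diff_subset card_mono)
  ultimately have "sorted_list_of_set G = L" using sorted_list_of_set_unique[OF G] by blast
  then show ?thesis unfolding L_def by simp
qed

lemma Vlip_ext: "p \<in> Vlip T C \<Longrightarrow> f \<notin> fns \<rat> (fst p) \<Longrightarrow> snd p f = undefined"
  unfolding Vlip_def by auto

lemma Vlip_fin: "p \<in> Vlip T C \<Longrightarrow> finite (fst p)"
  unfolding Vlip_def by auto

lemma node_mono:
  fixes p q :: "'a::metric_space bunch"
  assumes pV: "p \<in> Vlip TYPE('a) C" and qV: "q \<in> Vlip TYPE('a) C" and le: "bunch_le \<rat> p q"
  shows "node \<delta> p = take (length (node \<delta> p)) (node \<delta> q)"
    and "p \<noteq> q \<Longrightarrow> length (node \<delta> p) < length (node \<delta> q)"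
proof -
  obtain F x where p: "p = (F, x)" by (cases p)
  obtain G y where q: "q = (G, y)" by (cases q)
  have F: "finite F" and G: "finite G" using Vlip_fin[OF pV] Vlip_fin[OF qV] p q by auto
  have seg: "initial_segment F G" and agree: "\<And>f. f \<in> fns \<rat> F \<Longrightarrow> y f = x f"
    using le p q unfolding bunch_le_def by auto
  have FG: "F \<subseteq> G" using seg unfolding initial_segment_def by auto
  have cle: "card F \<le> card G" using card_mono[OF G FG] .
  have sl: "sorted_list_of_set F = take (card F) (sorted_list_of_set G)" using sorted_initial[OF G seg] .
  show "node \<delta> p = take (length (node \<delta> p)) (node \<delta> q)"
  proof (rule nth_equalityI)
    show "length (node \<delta> p) = length (take (length (node \<delta> p)) (node \<delta> q))"
      using cle p q unfolding node_def by simp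
  next
    fix i assume "i < length (node \<delta> p)"
    then have i: "i < card F" using p unfolding node_def by simp
    have tk: "take (Suc i) (sorted_list_of_set F) = take (Suc i) (sorted_list_of_set G)"
      using sl i by (simp add: min_def)
    have nthe: "sorted_list_of_set F ! i = sorted_list_of_set G ! i"
      using sl i by simp
    have "set (take (Suc i) (sorted_list_of_set F)) \<subseteq> set (sorted_list_of_set F)"
      by (rule set_take_subset)
    then have sF: "set (take (Suc i) (sorted_list_of_set F)) \<subseteq> F" using F by simp
    have fcin: "fc (take (Suc i) (sorted_list_of_set F)) c \<in> fns \<rat> F" for c
      using fc_fns[of "take (Suc i) (sorted_list_of_set F)" c] sF unfolding fns_def by blast
    have mp: "map (\<lambda>j. approx \<delta> i (x (fc (take (Suc i) (sorted_list_of_set F)) (from_nat j :: rat list)))) [0..<Suc i]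
      = map (\<lambda>j. approx \<delta> i (y (fc (take (Suc i) (sorted_list_of_set F)) (from_nat j :: rat list)))) [0..<Suc i]"
      using agree[OF fcin] by simp
    have "entry \<delta> (sorted_list_of_set F) x i = entry \<delta> (sorted_list_of_set G) y i"
      unfolding entry_def mp tk[symmetric] nthe[symmetric] ..
    then show "node \<delta> p ! i = take (length (node \<delta> p)) (node \<delta> q) ! i"
      using i cle p q unfolding node_def by simp
  qed
  show "length (node \<delta> p) < length (node \<delta> q)" if "p \<noteq> q"
  proof (rule ccontr)
    assume "\<not> length (node \<delta> p) < length (node \<delta> q)"
    then have "card G \<le> card F" using p q unfolding node_def by simp
    then have "card F = card G" using cle by linarith
    then have FeG: "F = G" by (rule card_subset_eq[OF G FG])
    have "x = y"
    proof
      fix f show "x f = y f"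
      proof (cases "f \<in> fns \<rat> F")
        case True then show ?thesis using agree by simp
      next
        case False then show ?thesis using Vlip_ext[OF pV, of f] Vlip_ext[OF qV, of f] p q FeG by simp
      qed
    qed
    then show False using that p q FeG by simp
  qed
qed




lemma approx_prop:
  assumes dense: "\<And>y e. e > 0 \<Longrightarrow> \<exists>m. dist (\<delta> m) y < e"
  shows "dist (\<delta> (approx \<delta> i y)) y < 1 / real (Suc i)"
  unfolding approx_def by (rule LeastI_ex) (rule dense, simp)

lemma length_node: "length (node \<delta> p) = card (fst p)"
  unfolding node_def by simp

lemma factE:
  assumes "k \<le> length (node \<delta> p)" "take k (node \<delta> p) = map b [0..<k]" "i < k"
  shows "sorted_list_of_set (fst p) ! i = fst (from_nat (b i) :: nat \<times> nat list) \<and>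
    snd (from_nat (b i) :: nat \<times> nat list) =
      map (\<lambda>j. approx \<delta> i (snd p (fc (take (Suc i) (sorted_list_of_set (fst p))) (from_nat j :: rat list)))) [0..<Suc i]"
proof -
  have "node \<delta> p ! i = take k (node \<delta> p) ! i" using assms(3) by simp
  also have "\<dots> = b i" using assms(2,3) by simp
  finally have "node \<delta> p ! i = b i" .
  moreover have "node \<delta> p ! i = entry \<delta> (sorted_list_of_set (fst p)) (snd p) i"
    using assms(1,3) unfolding node_def by simp
  ultimately have "b i = to_nat (sorted_list_of_set (fst p) ! i,
     map (\<lambda>j. approx \<delta> i (snd p (fc (take (Suc i) (sorted_list_of_set (fst p))) (from_nat j :: rat list)))) [0..<Suc i])"
    unfolding entry_def by simp
  then show ?thesis by simp
qed

lemma takeS: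
  assumes "k \<le> length (node \<delta> p)" "take k (node \<delta> p) = map b [0..<k]" "Suc i \<le> k"
  shows "take (Suc i) (sorted_list_of_set (fst p)) = map (\<lambda>i'. fst (from_nat (b i') :: nat \<times> nat list)) [0..<Suc i]"
proof (rule nth_equalityI)
  have "Suc i \<le> length (sorted_list_of_set (fst p))" using assms(1,3) length_node[of \<delta> p] by simp
  then show "length (take (Suc i) (sorted_list_of_set (fst p))) = length (map (\<lambda>i'. fst (from_nat (b i') :: nat \<times> nat list)) [0..<Suc i])"
    by simp
next
  fix j assume "j < length (take (Suc i) (sorted_list_of_set (fst p)))"
  then have j: "j < Suc i" by simp
  have "map (\<lambda>i'. fst (from_nat (b i') :: nat \<times> nat list)) [0..<Suc i] ! j = fst (from_nat (b j) :: nat \<times> nat list)"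
    using j by (simp del: upt_Suc)
  moreover have "take (Suc i) (sorted_list_of_set (fst p)) ! j = sorted_list_of_set (fst p) ! j"
    using j by simp
  ultimately show "take (Suc i) (sorted_list_of_set (fst p)) ! j = map (\<lambda>i'. fst (from_nat (b i') :: nat \<times> nat list)) [0..<Suc i] ! j"
    using factE[OF assms(1,2), of j] assms(3) j by simp
qed

lemma Vlip_ineq:
  assumes "p \<in> Vlip TYPE('a::metric_space) C" "f \<in> fns \<rat> (fst p)" "g \<in> fns \<rat> (fst p)"
  shows "(1 / C) * supnorm (\<lambda>n. f n - g n) \<le> dist (snd p f) (snd p g) \<and>
         dist (snd p f) (snd p g) \<le> C * supnorm (\<lambda>n. f n - g n)"
  using assms unfolding Vlip_def by auto

lemma stage1:
  fixes \<delta> :: "nat \<Rightarrow> 'a::complete_space"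
  assumes dense: "\<And>y e. e > 0 \<Longrightarrow> \<exists>m. dist (\<delta> m) y < e"
    and n: "(n::nat) \<ge> 1"
    and br: "\<And>i. \<exists>p \<in> Vlip TYPE('a) (real n). i \<le> length (node \<delta> p) \<and> take i (node \<delta> p) = map b [0..<i]"
  shows "c0_bilip_embeds TYPE('a)"
proof -
  define N where "N i = fst (from_nat (b i) :: nat \<times> nat list)" for i
  define vl where "vl i = snd (from_nat (b i) :: nat \<times> nat list)" for i
  define S where "S i = map N [0..<Suc i]" for i
  have "\<forall>i. \<exists>p. p \<in> Vlip TYPE('a) (real n) \<and> Suc i \<le> length (node \<delta> p) \<and> take (Suc i) (node \<delta> p) = map b [0..<Suc i]"
    using br by blast
  from choice[OF this] obtain P where P0: "\<forall>i. P i \<in> Vlip TYPE('a) (real n) \<and> Suc i \<le> length (node \<delta> (P i)) \<and> take (Suc i) (node \<delta> (P i)) = map b [0..<Suc i]"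
    by blast
  have P: "\<And>i. P i \<in> Vlip TYPE('a) (real n)" "\<And>i. Suc i \<le> length (node \<delta> (P i))"
    "\<And>i. take (Suc i) (node \<delta> (P i)) = map b [0..<Suc i]"
    using P0 by auto
  have Pk: "take (Suc i) (node \<delta> (P i')) = map b [0..<Suc i]" "Suc i \<le> length (node \<delta> (P i'))"
    if "i \<le> i'" for i i'
  proof -
    have "take (Suc i) (node \<delta> (P i')) = take (Suc i) (take (Suc i') (node \<delta> (P i')))"
      using that by (simp add: min_def)
    also have "\<dots> = take (Suc i) (map b [0..<Suc i'])" using P(3) by simp
    also have "\<dots> = map b [0..<Suc i]" using that by (simp add: take_map take_upt min_def del: upt_Suc)
    finally show "take (Suc i) (node \<delta> (P i')) = map b [0..<Suc i]" .
    show "Suc i \<le> length (node \<delta> (P i'))" using P(2)[of i'] that by simp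
  qed
  define Fc where "Fc c = fc (map N [0..<length c]) c" for c :: "rat list"
  have SFc: "fc (S i) c = Fc c" if "length c \<le> Suc i" for i c
  proof -
    have "take (length c) (S i) = map N [0..<length c]" unfolding S_def using that by (simp add: take_map take_upt min_def del: upt_Suc)
    then show ?thesis unfolding Fc_def using fc_take[of "S i" c] by simp
  qed
  have Sgs: "take (Suc i) (sorted_list_of_set (fst (P i'))) = S i" if "i \<le> i'" for i i'
    using takeS[OF Pk(2)[OF that] Pk(1)[OF that], of i] unfolding S_def N_def by simp
  have vl_eq: "vl i ! j = approx \<delta> i (snd (P i') (fc (S i) (from_nat j :: rat list)))"
    if "i \<le> i'" "j \<le> i" for i i' j
  proof -
    have "vl i = map (\<lambda>j. approx \<delta> i (snd (P i') (fc (take (Suc i) (sorted_list_of_set (fst (P i')))) (from_nat j :: rat list)))) [0..<Suc i]"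
      using factE[OF Pk(2)[OF that(1)] Pk(1)[OF that(1)], of i] unfolding vl_def by simp
    then show ?thesis using Sgs[OF that(1)] that(2) by (simp del: upt_Suc)
  qed
  define pt where "pt i j = \<delta> (vl i ! j)" for i j
  define Mj where "Mj j = max j (length (from_nat j :: rat list))" for j
  have K: "dist (pt i j) (snd (P i') (Fc (from_nat j))) < 1 / real (Suc i)"
    if "Mj j \<le> i" "i \<le> i'" for i i' j
  proof -
    have "j \<le> i" "length (from_nat j :: rat list) \<le> Suc i" using that unfolding Mj_def by auto
    then show ?thesis unfolding pt_def using vl_eq[OF that(2) \<open>j \<le> i\<close>] SFc approx_prop[OF dense] by simp
  qed
  have conv: "convergent (\<lambda>i. pt i j)" for j
  proof (rule Cauchy_convergent)
    show "Cauchy (\<lambda>i. pt i j)"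
      unfolding Cauchy_def
    proof (intro allI impI)
      fix e :: real assume e: "e > 0"
      obtain M0 where M0: "\<And>m. m \<ge> M0 \<Longrightarrow> 1 / real (Suc m) < e / 2"
        using inv_Suc_small[of "e / 2"] e by auto
      show "\<exists>M. \<forall>m\<ge>M. \<forall>m'\<ge>M. dist (pt m j) (pt m' j) < e"
      proof (intro exI allI impI)
        fix m m' assume mm: "max M0 (Mj j) \<le> m" "max M0 (Mj j) \<le> m'"
        define z where "z = snd (P (max m m')) (Fc (from_nat j))"
        have "dist (pt m j) (pt m' j) \<le> dist (pt m j) z + dist (pt m' j) z" by (rule dist_triangle2)
        also have "\<dots> < 1 / real (Suc m) + 1 / real (Suc m')"
          using K[of j m "max m m'"] K[of j m' "max m m'"] mm unfolding z_def by (intro add_strict_mono) auto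
        also have "\<dots> < e / 2 + e / 2" using M0[of m] M0[of m'] mm by (intro add_strict_mono) auto
        finally show "dist (pt m j) (pt m' j) < e" by simp
      qed
    qed
  qed
  define Y where "Y c = lim (\<lambda>i. pt i (to_nat c))" for c :: "rat list"
  have Ylim: "(\<lambda>i. pt i (to_nat c)) \<longlonglongrightarrow> Y c" for c
    unfolding Y_def using conv convergent_LIMSEQ_iff by blast
  have Ybi: "(1 / real n) * supnorm (\<lambda>k. qvec c k - qvec c' k) \<le> dist (Y c) (Y c') \<and>
             dist (Y c) (Y c') \<le> real n * supnorm (\<lambda>k. qvec c k - qvec c' k)" for c c'
  proof -
    define j where "j = to_nat c"
    define j' where "j' = to_nat c'"
    define M where "M = max (Mj j) (Mj j')"
    define sg where "sg = supnorm (\<lambda>k. qvec c k - qvec c' k)"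
    have bounds: "(1 / real n) * sg - 2 / real (Suc i) \<le> dist (pt i j) (pt i j') \<and>
        dist (pt i j) (pt i j') \<le> real n * sg + 2 / real (Suc i)" if i: "M \<le> i" for i
    proof -
      define z where "z = snd (P i) (Fc c)"
      define z' where "z' = snd (P i) (Fc c')"
      have d1: "dist (pt i j) z < 1 / real (Suc i)"
        using K[of j i i] i unfolding M_def z_def j_def by simp
      have d2: "dist (pt i j') z' < 1 / real (Suc i)"
        using K[of j' i i] i unfolding M_def z'_def j'_def by simp
      have lc: "length c \<le> Suc i" "length c' \<le> Suc i"
        using i unfolding M_def Mj_def j_def j'_def by auto
      have Si: "take (Suc i) (sorted_list_of_set (fst (P i))) = S i" using Sgs[of i i] by simp
      have "distinct (take (Suc i) (sorted_list_of_set (fst (P i))))" by simp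
      then have dS: "distinct (S i)" using Si by simp
      have lS: "length (S i) = Suc i" unfolding S_def by simp
      have setS: "set (S i) \<subseteq> fst (P i)"
      proof -
        have fin: "finite (fst (P i))" using Vlip_fin[OF P(1)] .
        have "set (take (Suc i) (sorted_list_of_set (fst (P i)))) \<subseteq> set (sorted_list_of_set (fst (P i)))"
          by (rule set_take_subset)
        then have "set (S i) \<subseteq> set (sorted_list_of_set (fst (P i)))" using Si by simp
        then show ?thesis using fin by simp
      qed
      have fin1: "Fc c \<in> fns \<rat> (fst (P i))" "Fc c' \<in> fns \<rat> (fst (P i))"
        using fc_fns[of "S i" c] fc_fns[of "S i" c'] SFc[OF lc(1)] SFc[OF lc(2)] setS
        unfolding fns_def by auto
      have sgeq: "supnorm (\<lambda>k. Fc c k - Fc c' k) = sg"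
        using supnorm_fc[OF dS, of c c'] lc lS SFc[OF lc(1)] SFc[OF lc(2)] unfolding sg_def by simp
      have zz: "(1 / real n) * sg \<le> dist z z' \<and> dist z z' \<le> real n * sg"
        using Vlip_ineq[OF P(1) fin1] sgeq unfolding z_def z'_def by simp
      have t1: "dist (pt i j) (pt i j') \<le> dist (pt i j) z + dist z (pt i j')" by (rule dist_triangle)
      have t2: "dist z (pt i j') \<le> dist z z' + dist z' (pt i j')" by (rule dist_triangle)
      have t3: "dist z z' \<le> dist z (pt i j) + dist (pt i j) z'" by (rule dist_triangle)
      have t4: "dist (pt i j) z' \<le> dist (pt i j) (pt i j') + dist (pt i j') z'" by (rule dist_triangle)
      have c1: "dist z (pt i j) = dist (pt i j) z" "dist z' (pt i j') = dist (pt i j') z'" by (simp_all add: dist_commute)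
      note t1 t2 t3 t4 c1
      moreover have "2 / real (Suc i) = 1 / real (Suc i) + 1 / real (Suc i)" by simp
      ultimately show ?thesis using d1 d2 zz by linarith
    qed
    have lim2: "(\<lambda>i. 2 / real (Suc i)) \<longlonglongrightarrow> 0"
      using tendsto_mult_right_zero[OF LIMSEQ_inverse_real_of_nat, of 2] by (simp add: divide_inverse)
    have dl: "(\<lambda>i. dist (pt i j) (pt i j')) \<longlonglongrightarrow> dist (Y c) (Y c')"
      using tendsto_dist[OF Ylim[of c] Ylim[of c']] unfolding j_def j'_def .
    have "(1 / real n) * sg \<le> dist (Y c) (Y c')"
    proof (rule LIMSEQ_le[OF _ dl])
      show "(\<lambda>i. (1 / real n) * sg - 2 / real (Suc i)) \<longlonglongrightarrow> (1 / real n) * sg"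
        using tendsto_diff[OF tendsto_const lim2, of "(1 / real n) * sg"] by simp
      show "\<exists>N. \<forall>i\<ge>N. (1 / real n) * sg - 2 / real (Suc i) \<le> dist (pt i j) (pt i j')"
        using bounds by blast
    qed
    moreover have "dist (Y c) (Y c') \<le> real n * sg"
    proof (rule LIMSEQ_le[OF dl])
      show "(\<lambda>i. real n * sg + 2 / real (Suc i)) \<longlonglongrightarrow> real n * sg"
        using tendsto_add[OF tendsto_const lim2, of "real n * sg"] by simp
      show "\<exists>N. \<forall>i\<ge>N. dist (pt i j) (pt i j') \<le> real n * sg + 2 / real (Suc i)"
        using bounds by blast
    qed
    ultimately show ?thesis unfolding sg_def by simp
  qed
  show ?thesis
    by (rule stage2[of "real n" Y]) (use n Ybi in auto)
qed




lemma Vlip_mono: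
  assumes C: "0 < C" "C \<le> C'"
  shows "Vlip T C \<subseteq> Vlip T C'"
proof
  fix p assume pV: "p \<in> Vlip T C"
  obtain G x where p: "p = (G, x)" by (cases p)
  have G: "finite G" and ext: "\<forall>f. f \<notin> fns \<rat> G \<longrightarrow> x f = undefined"
    and ineq: "\<And>f g. f \<in> fns \<rat> G \<Longrightarrow> g \<in> fns \<rat> G \<Longrightarrow>
         (1 / C) * supnorm (\<lambda>n. f n - g n) \<le> dist (x f) (x g) \<and>
         dist (x f) (x g) \<le> C * supnorm (\<lambda>n. f n - g n)"
    using pV p unfolding Vlip_def by auto
  have "(1 / C') * supnorm (\<lambda>n. f n - g n) \<le> dist (x f) (x g) \<and>
         dist (x f) (x g) \<le> C' * supnorm (\<lambda>n. f n - g n)"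
    if f: "f \<in> fns \<rat> G" and g: "g \<in> fns \<rat> G" for f g
  proof -
    have "bnd (\<lambda>n. f n - g n)"
      using bnd_diff c0_bnd fns_finite_supp_c0[OF G f] fns_finite_supp_c0[OF G g] by blast
    then have "\<bar>f 0 - g 0\<bar> \<le> supnorm (\<lambda>n. f n - g n)" using supnorm_ge by blast
    then have s0: "0 \<le> supnorm (\<lambda>n. f n - g n)" by linarith
    have "1 / C' \<le> 1 / C" using C by (simp add: frac_le)
    then have "(1 / C') * supnorm (\<lambda>n. f n - g n) \<le> (1 / C) * supnorm (\<lambda>n. f n - g n)"
      using s0 by (rule mult_right_mono)
    moreover have "C * supnorm (\<lambda>n. f n - g n) \<le> C' * supnorm (\<lambda>n. f n - g n)"
      using C(2) s0 by (rule mult_right_mono)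
    ultimately show ?thesis using ineq[OF f g] by linarith
  qed
  then show "p \<in> Vlip T C'" unfolding p Vlip_def using G ext by blast
qed

lemma map_upt_shift: "map b [0..<Suc i] = b 0 # map (\<lambda>x. b (Suc x)) [0..<i]"
proof -
  have "[0..<Suc i] = 0 # [Suc 0..<Suc i]" by (rule upt_conv_Cons) simp
  moreover have "[Suc 0..<Suc i] = map Suc [0..<i]" by (simp add: map_Suc_upt)
  ultimately show ?thesis by simp
qed

lemma backward:
  assumes sep: "\<exists>D :: 'a::complete_space set. countable D \<and> closure D = UNIV"
    and L: "Lip_c0_index_ge_omega1 TYPE('a)"
  shows "c0_bilip_embeds TYPE('a)"
proof (rule ccontr)
  assume ne: "\<not> c0_bilip_embeds TYPE('a)"
  obtain D :: "'a set" where D: "countable D" "closure D = UNIV" using sep by blast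
  have Dne: "D \<noteq> {}" using D(2) by auto
  define \<delta> where "\<delta> = from_nat_into D"
  have rng: "range \<delta> = D" unfolding \<delta>_def using range_from_nat_into[OF Dne D(1)] .
  have dense: "\<exists>m. dist (\<delta> m) y < e" if e: "e > 0" for y e
  proof -
    have "y \<in> closure D" using D(2) by simp
    then obtain x where "x \<in> D" "dist x y < e" using e unfolding closure_approachable by blast
    then show ?thesis using rng by (metis rangeE)
  qed
  define A where "A = insert [] {n # node \<delta> p | n p. n \<ge> 1 \<and> p \<in> Vlip TYPE('a) (real n)}"
  have noch: "\<not> (\<exists>s. \<forall>k. s k \<in> A \<and> kb (s (Suc k)) (s k))"
  proof
    assume "\<exists>s. \<forall>k. s k \<in> A \<and> kb (s (Suc k)) (s k)"
    then obtain s where s: "\<And>k. s k \<in> A" "\<And>k. kb (s (Suc k)) (s k)" by blast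
    obtain b where b: "\<And>i. \<exists>k. i \<le> length (s k) \<and> take i (s k) = map b [0..<i]"
      using kb_branch[of s, OF s(2)] by blast
    have lev: "\<exists>p \<in> Vlip TYPE('a) (real (b 0)). i \<le> length (node \<delta> p) \<and> take i (node \<delta> p) = map (\<lambda>x. b (Suc x)) [0..<i]
      \<and> b 0 \<ge> 1" for i
    proof -
      obtain k where k: "Suc i \<le> length (s k)" "take (Suc i) (s k) = map b [0..<Suc i]" using b by blast
      have "s k \<noteq> []" using k(1) by auto
      then obtain n p where np: "s k = n # node \<delta> p" "n \<ge> 1" "p \<in> Vlip TYPE('a) (real n)"
        using s(1)[of k] unfolding A_def by blast
      have "n # take i (node \<delta> p) = b 0 # map (\<lambda>x. b (Suc x)) [0..<i]"
        using k(2) np(1) map_upt_shift[of b i] by simp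
      then have "n = b 0" "take i (node \<delta> p) = map (\<lambda>x. b (Suc x)) [0..<i]" by auto
      moreover have "i \<le> length (node \<delta> p)" using k(1) np(1) by simp
      ultimately show ?thesis using np by blast
    qed
    have n1: "b 0 \<ge> 1" using lev[of 0] by blast
    have "c0_bilip_embeds TYPE('a)"
      by (rule stage1[of \<delta> "b 0" "\<lambda>x. b (Suc x)"]) (use dense n1 lev in blast)+
    then show False using ne by blast
  qed
  have nilA: "[] \<in> A" unfolding A_def by simp
  have wo: "Well_order (kbr A)" using kbr_Well_order[OF noch] .
  obtain C where C: "C > 0" "deriv_at \<rat> (kbr A) (Vlip TYPE('a) C) (to_nat ([]::nat list)) \<noteq> {}"
    using L wo nil_Field[OF nilA] unfolding Lip_c0_index_ge_omega1_def by blast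
  define n where "n = nat \<lceil>C\<rceil>"
  have n1: "n \<ge> 1" unfolding n_def using C(1) by linarith
  have Cn: "C \<le> real n" unfolding n_def by linarith
  have sub: "Vlip TYPE('a) C \<subseteq> Vlip TYPE('a) (real n)" using Vlip_mono[OF C(1) Cn] .
  have "deriv_at \<rat> (kbr A) (Vlip TYPE('a) C) (to_nat ([]::nat list)) = {}"
  proof (rule deriv_empty[OF noch, where code = "\<lambda>p. n # node \<delta> p"])
    show "\<And>p. p \<in> Vlip TYPE('a) C \<Longrightarrow> n # node \<delta> p \<in> A"
      using sub n1 unfolding A_def by blast
    show "[] \<in> A" by (rule nilA)
    show "\<And>p. p \<in> Vlip TYPE('a) C \<Longrightarrow> n # node \<delta> p \<noteq> []" by simp
    show "kb (n # node \<delta> q) (n # node \<delta> p)"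
      if "p \<in> Vlip TYPE('a) C" "q \<in> Vlip TYPE('a) C" "bunch_le \<rat> p q" "p \<noteq> q" for p q
    proof (rule kb_prefix)
      show "length (n # node \<delta> p) < length (n # node \<delta> q)"
        using node_mono(2)[OF that(1,2,3) that(4)] by simp
      show "take (length (n # node \<delta> p)) (n # node \<delta> q) = n # node \<delta> p"
        using node_mono(1)[OF that(1,2,3), of \<delta>] by simp
    qed
  qed
  then show False using C(2) by blast
qed

theorem proposition3p3:
  assumes "\<exists>D :: 'a::complete_space set. countable D \<and> closure D = UNIV"
  shows "c0_bilip_embeds TYPE('a) \<longleftrightarrow> Lip_c0_index_ge_omega1 TYPE('a)"
  using forward backward[OF assms] by blast


end
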